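(* If $n$ is a positive integer that is non-composite ($n=1$ or $n$ prime), then \[ Z(2n-1)\equiv 0\pmod{n}, \] where $Z(m)=\sum_{k=0}^{m-1}\frac{1+(-1)^{k}k!(m-k-1)!}{m}$. *)

theory Defs
  imports Complex_Main "HOL-Computational_Algebra.Primes"
begin

definition Z :: "nat \<Rightarrow> rat" where
  "Z m = (\<Sum>k<m. (1 + (-1) ^ k * fact k * fact (m - k - 1)) / of_nat m)"

end

theory Submission
  imports Defs "HOL-Number_Theory.Number_Theory"
begin

lemma tele:
  fixes b :: "nat \<Rightarrow> 'a::comm_ring_1"
  shows "(\<Sum>k<M. (-1)^k * (b k + b (Suc k))) = b 0 - (-1)^M * b M"
  by (induction M) (auto simp: algebra_simps)

lemma key_identity:
  fixes N :: nat
  shows "of_nat (N+2) * (\<Sum>k<Suc N. (-1)^k * fact k * fact (N - k) :: rat)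
         = fact (N+1) + (-1)^N * fact (N+1)"
proof -
  define b :: "nat \<Rightarrow> rat" where "b k = fact k * fact (N + 1 - k)" for k
  have step: "of_nat (N+2) * ((-1)^k * fact k * fact (N - k)) = (-1)^k * (b k + b (Suc k))"
    if "k < Suc N" for k
  proof -
    have e1: "fact (N + 1 - k) = (of_nat (N + 1 - k) :: rat) * fact (N - k)"
      using that by (metis Suc_diff_le Suc_eq_plus1 fact_Suc less_Suc_eq_le of_nat_Suc
          diff_Suc_1 mult.commute)
    have e2: "N + 1 - Suc k = N - k" by simp
    have "b k + b (Suc k) = of_nat (N+2) * (fact k * fact (N - k))"
      unfolding b_def e2 e1 using that
      by (simp add: algebra_simps of_nat_diff)
    then show ?thesis by (simp add: algebra_simps)
  qed
  have "of_nat (N+2) * (\<Sum>k<Suc N. (-1)^k * fact k * fact (N - k) :: rat)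
      = (\<Sum>k<Suc N. (-1)^k * (b k + b (Suc k)))"
    unfolding sum_distrib_left by (intro sum.cong refl step) simp
  also have "\<dots> = b 0 - (-1)^(Suc N) * b (Suc N)" by (rule tele)
  also have "\<dots> = fact (N+1) + (-1)^N * fact (N+1)" by (simp add: b_def)
  finally show ?thesis .
qed

lemma fact_add_prod: "fact (m + k) = (fact m :: int) * (\<Prod>i=1..k. of_nat (m + i))"
proof (induction k)
  case 0 then show ?case by simp
next
  case (Suc k)
  have "{1..Suc k} = insert (Suc k) {1..k}" by auto
  then have "(\<Prod>i=1..Suc k. (of_nat (m + i)::int)) = of_nat (m + Suc k) * (\<Prod>i=1..k. of_nat (m + i))"
    by simp
  then show ?case using Suc by (simp add: algebra_simps)
qed

lemma Z_formula:
  assumes "n > 0"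
  shows "Z (2*n - 1) = 1 + fact (2*n - 2) / of_nat n"
proof -
  define N where "N = 2*n - 2"
  have m: "2*n - 1 = Suc N" using assms by (simp add: N_def)
  define S :: rat where "S = (\<Sum>k<Suc N. (-1)^k * fact k * fact (N - k))"
  have Z1: "Z (2*n-1) = (of_nat (Suc N) + S) / of_nat (Suc N)"
    unfolding Z_def m S_def
    by (simp add: sum_divide_distrib[symmetric] sum.distrib)
  have ev: "even N" by (simp add: N_def)
  have "of_nat (N+2) * S = 2 * fact (N+1)"
    using key_identity[of N] ev unfolding S_def by simp
  moreover have "(of_nat (N+2) :: rat) = 2 * of_nat n" using assms by (simp add: N_def)
  ultimately have "of_nat n * S = fact (N+1)" by simp
  then have S: "S = fact (N+1) / of_nat n" using assms
    by (simp add: field_simps)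
  have "fact (N+1) = (of_nat (Suc N) :: rat) * fact N" by simp
  then show ?thesis unfolding Z1 S using assms
    by (simp add: field_simps N_def)
qed

theorem mainTheorem10:
  fixes n :: nat
  assumes "n > 0" and "n = 1 \<or> prime n"
  shows "\<exists>z::int. Z (2 * n - 1) = of_int z \<and> int n dvd z"
proof -
  have dv: "int n dvd fact (2*n - 2)"
  proof (cases "n = 1")
    case True then show ?thesis by simp
  next
    case False
    then have "prime n" using assms by auto
    then have "n \<ge> 2" using prime_ge_2_nat by blast
    then have "n dvd (fact (2*n-2) :: nat)" by (intro dvd_fact) auto
    then show ?thesis by (metis int_dvd_int_iff of_nat_fact)
  qed
  then obtain d where d: "fact (2*n - 2) = int n * d" by blast
  have Zd: "Z (2*n - 1) = of_int (1 + d)"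
  proof -
    have "(fact (2*n-2) :: rat) = of_int (fact (2*n-2))" by simp
    also have "\<dots> = of_nat n * of_int d" using d by simp
    finally show ?thesis using Z_formula[OF assms(1)] assms(1) by simp
  qed
  have "int n dvd 1 + d"
  proof (cases "n = 1")
    case True then show ?thesis by simp
  next
    case False
    then have p: "prime n" using assms by auto
    then have p2: "n \<ge> 2" using prime_ge_2_nat by blast
    define W :: int where "W = fact (n - 1)"
    define F :: int where "F = fact (n - 2)"
    define Q :: int where "Q = (\<Prod>i=1..n-2. of_nat (n + i))"
    have n1: "n - 1 = Suc (n - 2)" using p2 by simp
    have WF: "W = (int n - 1) * F" unfolding W_def F_def n1 fact_Suc using p2
      by (simp add: of_nat_diff)
    have fs: "fact (2*n - 2) = (fact n :: int) * Q"
      using fact_add_prod[of n "n-2"] p2 unfolding Q_def by (simp add: mult_2)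
    have n0: "n = Suc (n - 1)" using p2 by simp
    have "fact n = int n * W" unfolding W_def by (subst n0, subst fact_Suc) (use p2 in \<open>simp add: of_nat_diff\<close>)
    then have "int n * d = int n * (W * Q)" unfolding d[symmetric] fs by (simp only: mult.assoc)
    then have dWQ: "d = W * Q" using p2 by auto
    have wil: "int n dvd W + 1" using wilson_theorem[OF p]
      unfolding W_def cong_iff_dvd_diff by simp
    have QF: "int n dvd Q - F"
    proof -
      have "[Q = (\<Prod>i=1..n-2. (of_nat i :: int))] (mod int n)"
        unfolding Q_def by (intro cong_prod) (simp add: cong_def)
      moreover have "(\<Prod>i=1..n-2. (of_nat i :: int)) = F"
        unfolding F_def by (simp add: fact_prod)
      ultimately show ?thesis by (simp add: cong_iff_dvd_diff)
    qed
    have F1: "int n dvd 1 - F"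
    proof -
      have e: "int n * F - (W + 1) = F - 1" using WF by (simp add: algebra_simps)
      have "int n dvd int n * F - (W + 1)" using wil by (intro dvd_diff dvd_triv_left)
      then have "int n dvd F - 1" unfolding e .
      then have "int n dvd - (F - 1)" by (simp only: dvd_minus_iff)
      then show ?thesis by simp
    qed
    have e2: "1 + d = (W + 1) - W * (1 - F) + W * (Q - F)"
      using dWQ by (simp add: algebra_simps)
    have "int n dvd (W + 1) - W * (1 - F) + W * (Q - F)"
      by (rule dvd_add[OF dvd_diff[OF wil dvd_mult[OF F1]] dvd_mult[OF QF]])
    then show ?thesis unfolding e2 .
  qed
  then show ?thesis using Zd by blast
qed

end
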